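(* There exist $(a_1,a_2,a_3,a_4)$ and $(b_1,b_2,b_3,b_4)$ with all $a_j,b_j\in(0,1)$, $\sum_j a_j=\sum_jb_j=1$, and $(b_j)$ not a permutation of $(a_j)$, such that $$\theta(a;0)=\theta(b;0),\quad \theta(a;1)=\theta(b;1),\quad \theta'(a;0)=\theta'(b;0),\quad \theta'(a;1)=\theta'(b;1),$$ where $\theta(x_1,x_2,x_3,x_4;q)=\log(x_1^q+x_2^q+x_3^q+x_4^q)$ and $\theta'$ denotes the derivative with respect to $q$.
   Context: $\theta'(x_1,\dots,x_4;q)=\dfrac{\sum_{i=1}^4x_i^q\log x_i}{\sum_{i=1}^4x_i^q}$. *)

theory Defs
  imports "HOL-Analysis.Analysis"
begin

definition theta :: "real^4 \<Rightarrow> real \<Rightarrow> real" where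
  "theta x q = ln (\<Sum>i\<in>UNIV. (x $ i) powr q)"

text \<open>theta'(x;q) = derivative in q: sum x_i^q log x_i / sum x_i^q.\<close>
definition theta' :: "real^4 \<Rightarrow> real \<Rightarrow> real" where
  "theta' x q = (\<Sum>i\<in>UNIV. (x $ i) powr q * ln (x $ i)) / (\<Sum>i\<in>UNIV. (x $ i) powr q)"

end

theory Submission
  imports Defs
begin

definition PP :: real where "PP = 9/4096"
definition DD :: "real \<Rightarrow> real" where "DD u = (1-2*u)^2 - 4*PP/u^2"
definition VV :: "real \<Rightarrow> real" where "VV u = ((1-2*u) + sqrt (DD u))/2"
definition WW :: "real \<Rightarrow> real" where "WW u = ((1-2*u) - sqrt (DD u))/2"
definition FF :: "real \<Rightarrow> real^4" where
  "FF u = (\<chi> i. if i = 1 then u else if i = 2 then u else if i = 3 then VV u else WW u)"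
definition gg :: "real \<Rightarrow> real" where
  "gg u = 2*(u*ln u) + VV u * ln (VV u) + WW u * ln (WW u)"

lemma DD_nonneg: assumes "1/8 \<le> u" "u \<le> 3/8" shows "0 \<le> DD u"
proof -
  have u0: "u > 0" using assms by simp
  have "(u-1/8)*(3/8-u) \<ge> 0" using assms by (intro mult_nonneg_nonneg) auto
  moreover have "u*(1-2*u) - 3/32 = 2*((u-1/8)*(3/8-u))" by (simp add: field_simps)
  ultimately have "u*(1-2*u) \<ge> 3/32" by linarith
  hence "(u*(1-2*u))^2 \<ge> (3/32)^2" by (intro power_mono) auto
  hence "u^2*(1-2*u)^2 \<ge> 4*PP" by (auto simp: PP_def power_mult_distrib eval_nat_numeral mult_ac)
  thus ?thesis using u0 unfolding DD_def by (simp add: field_simps)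
qed

lemma DD_pos: assumes "1/8 < u" "u < 3/8" shows "0 < DD u"
proof -
  have u0: "u > 0" using assms by simp
  have "(u-1/8)*(3/8-u) > 0" using assms by (intro mult_pos_pos) auto
  moreover have "u*(1-2*u) - 3/32 = 2*((u-1/8)*(3/8-u))" by (simp add: field_simps)
  ultimately have "u*(1-2*u) > 3/32" by linarith
  hence "(u*(1-2*u))^2 > (3/32)^2" by (intro power_strict_mono) auto
  hence "u^2*(1-2*u)^2 > 4*PP" by (auto simp: PP_def power_mult_distrib eval_nat_numeral mult_ac)
  thus ?thesis using u0 unfolding DD_def by (simp add: field_simps)
qed

lemma props:
  assumes "1/8 \<le> u" "u \<le> 3/8"
  shows "0 < WW u" "0 < VV u" "VV u + WW u = 1-2*u" "VV u * WW u = PP/u^2"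
proof -
  have u0: "u > 0" using assms by simp
  have d: "0 \<le> DD u" using DD_nonneg assms by blast
  have s2: "(sqrt (DD u))^2 = DD u" using d by simp
  have p: "4*PP/u^2 > 0" using u0 by (simp add: PP_def)
  have lt: "DD u < (1-2*u)^2" using p unfolding DD_def by linarith
  have "sqrt (DD u) < sqrt ((1-2*u)^2)" using lt by (subst real_sqrt_less_iff) simp
  also have "\<dots> = 1-2*u" using assms by simp
  finally have sl: "sqrt (DD u) < 1-2*u" .
  show "0 < WW u" unfolding WW_def using sl by simp
  show "0 < VV u" unfolding VV_def using sl d assms real_sqrt_ge_zero[OF d] by (simp add: add_pos_nonneg)
  show "VV u + WW u = 1-2*u" unfolding VV_def WW_def by (simp add: field_simps)
  have "VV u * WW u = ((1-2*u)^2 - (sqrt (DD u))^2)/4"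
    unfolding VV_def WW_def by (simp add: algebra_simps power2_eq_square)
  also have "\<dots> = ((1-2*u)^2 - DD u)/4" by (simp only: s2)
  also have "\<dots> = PP/u^2" unfolding DD_def by simp
  finally show "VV u * WW u = PP/u^2" .
qed

lemma VW_ne: assumes "1/8 < u" "u < 3/8" shows "VV u \<noteq> WW u"
  using DD_pos[OF assms] unfolding VV_def WW_def by simp

lemma ends: "VV (1/8) = 3/8" "WW (1/8) = 3/8" "VV (3/8) = 1/8" "WW (3/8) = 1/8"
  by (simp_all add: VV_def WW_def DD_def PP_def power2_eq_square)

lemma gg_ends: "gg (1/8) = gg (3/8)"
  unfolding gg_def ends by simp

lemma cont_VW: "continuous_on {1/8..3/8} VV" "continuous_on {1/8..3/8} WW"
  unfolding VV_def WW_def DD_def by (intro continuous_intros; auto)+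

lemma cont_gg: "continuous_on {1/8..3/8} gg"
  unfolding gg_def
  using props cont_VW
  by (intro continuous_intros; force)

lemma key: "\<exists>u1 u2. 1/8 < u1 \<and> u1 < 3/8 \<and> 1/8 \<le> u2 \<and> u2 \<le> 3/8 \<and> u1 \<noteq> u2 \<and> gg u1 = gg u2"
proof -
  have c1: "continuous_on {1/8..1/4} gg" by (rule continuous_on_subset[OF cont_gg]) auto
  have c2: "continuous_on {1/4..3/8} gg" by (rule continuous_on_subset[OF cont_gg]) auto
  consider "gg (1/4) = gg (1/8)" | "gg (1/4) > gg (1/8)" | "gg (1/4) < gg (1/8)" by linarith
  then show ?thesis
  proof cases
    case 1 then show ?thesis by (intro exI[of _ "1/4"] exI[of _ "1/8"]) auto
  next
    case 2
    define L where "L = (gg (1/4) + gg (1/8))/2"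
    obtain x1 where x1: "1/8 \<le> x1" "x1 \<le> 1/4" "gg x1 = L"
      using IVT'[of gg "1/8" L "1/4", OF _ _ _ c1] 2 unfolding L_def by auto
    obtain x2 where x2: "1/4 \<le> x2" "x2 \<le> 3/8" "gg x2 = L"
      using IVT2'[of gg "3/8" L "1/4", OF _ _ _ c2] 2 gg_ends unfolding L_def by auto
    have "gg x1 \<noteq> gg (1/8)"
    proof
      assume "gg x1 = gg (1/8)"
      with x1(3) 2 show False unfolding L_def by argo
    qed
    moreover have "gg x1 \<noteq> gg (1/4)"
    proof
      assume "gg x1 = gg (1/4)"
      with x1(3) 2 show False unfolding L_def by argo
    qed
    ultimately have "x1 \<noteq> 1/8" "x1 \<noteq> 1/4" by metis+
    thus ?thesis using x1 x2 by (intro exI[of _ x1] exI[of _ x2]) auto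
  next
    case 3
    define L where "L = (gg (1/4) + gg (1/8))/2"
    obtain x1 where x1: "1/8 \<le> x1" "x1 \<le> 1/4" "gg x1 = L"
      using IVT2'[of gg "1/4" L "1/8", OF _ _ _ c1] 3 unfolding L_def by auto
    obtain x2 where x2: "1/4 \<le> x2" "x2 \<le> 3/8" "gg x2 = L"
      using IVT'[of gg "1/4" L "3/8", OF _ _ _ c2] 3 gg_ends unfolding L_def by auto
    have "gg x1 \<noteq> gg (1/8)"
    proof
      assume "gg x1 = gg (1/8)"
      with x1(3) 3 show False unfolding L_def by argo
    qed
    moreover have "gg x1 \<noteq> gg (1/4)"
    proof
      assume "gg x1 = gg (1/4)"
      with x1(3) 3 show False unfolding L_def by argo
    qed
    ultimately have "x1 \<noteq> 1/8" "x1 \<noteq> 1/4" by metis+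
    thus ?thesis using x1 x2 by (intro exI[of _ x1] exI[of _ x2]) auto
  qed
qed

lemma FF_facts:
  assumes "1/8 \<le> u" "u \<le> 3/8"
  shows "\<forall>j. 0 < FF u $ j \<and> FF u $ j < 1"
    "(\<Sum>j\<in>UNIV. FF u $ j) = 1"
    "theta (FF u) 0 = ln 4" "theta (FF u) 1 = 0"
    "theta' (FF u) 0 = ln PP / 4" "theta' (FF u) 1 = gg u"
proof -
  note p = props[OF assms]
  have u0: "0 < u" using assms by simp
  have s: "u + u + VV u + WW u = 1" using p(3) by simp
  show "\<forall>j. 0 < FF u $ j \<and> FF u $ j < 1"
    unfolding forall_4 FF_def using p s u0 by auto
  show sm: "(\<Sum>j\<in>UNIV. FF u $ j) = 1" unfolding sum_4 FF_def using s by simp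
  show "theta (FF u) 0 = ln 4" unfolding theta_def sum_4 FF_def using p u0 by simp
  show "theta (FF u) 1 = 0" unfolding theta_def sum_4 FF_def using p u0 s by simp
  have "ln u + ln u + ln (VV u) + ln (WW u) = ln (u*u*VV u*WW u)"
    using p u0 by (simp add: ln_mult)
  also have "u*u*VV u*WW u = PP" using p(4) u0 by (simp add: field_simps power2_eq_square)
  finally have l: "ln u + ln u + ln (VV u) + ln (WW u) = ln PP" .
  show "theta' (FF u) 0 = ln PP / 4" unfolding theta'_def sum_4 FF_def using p u0 l by simp
  show "theta' (FF u) 1 = gg u" unfolding theta'_def sum_4 FF_def gg_def using p u0 s by simp
qed

theorem theorem10:
  shows "\<exists>a b :: real^4.
     (\<forall>j. 0 < a $ j \<and> a $ j < 1) \<and> (\<forall>j. 0 < b $ j \<and> b $ j < 1) \<and>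
     (\<Sum>j\<in>UNIV. a $ j) = 1 \<and> (\<Sum>j\<in>UNIV. b $ j) = 1 \<and>
     \<not> (\<exists>\<sigma>. \<sigma> permutes (UNIV :: 4 set) \<and> (\<forall>j. b $ j = a $ (\<sigma> j))) \<and>
     theta a 0 = theta b 0 \<and> theta a 1 = theta b 1 \<and>
     theta' a 0 = theta' b 0 \<and> theta' a 1 = theta' b 1"
proof -
  obtain u1 u2 where u: "1/8 < u1" "u1 < 3/8" "1/8 \<le> u2" "u2 \<le> 3/8" "u1 \<noteq> u2" "gg u1 = gg u2"
    using key by blast
  note A = FF_facts[of u1] and B = FF_facts[of u2]
  have ne: "VV u1 \<noteq> WW u1" using VW_ne u by blast
  have np: "\<not> (\<exists>\<sigma>. \<sigma> permutes (UNIV :: 4 set) \<and> (\<forall>j. FF u2 $ j = FF u1 $ (\<sigma> j)))"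
  proof
    assume "\<exists>\<sigma>. \<sigma> permutes (UNIV :: 4 set) \<and> (\<forall>j. FF u2 $ j = FF u1 $ (\<sigma> j))"
    then obtain \<sigma> where sp: "\<sigma> permutes (UNIV :: 4 set)" and e: "\<forall>j. FF u2 $ j = FF u1 $ (\<sigma> j)" by blast
    have n12: "(1::4) \<noteq> 2" by simp
    have d: "\<sigma> 1 \<noteq> \<sigma> 2" using permutes_inj[OF sp] n12 by (metis inj_eq)
    have e1: "FF u1 $ (\<sigma> 1) = u2" and e2: "FF u1 $ (\<sigma> 2) = u2"
      using e[rule_format, of 1] e[rule_format, of 2] by (simp_all add: FF_def)
    show False
      using exhaust_4[of "\<sigma> 1"] exhaust_4[of "\<sigma> 2"] d e1 e2 ne u(5)
      by (auto simp: FF_def)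
  qed
  show ?thesis
    apply (rule exI[of _ "FF u1"], rule exI[of _ "FF u2"])
    using A B u np by auto
qed

end
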